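(* The set of properties $\{AL, BR, ER, \{1\}\}$ is query-complete, where $AL$ is the set of alternating permutations, $BR$ is the set of permutations $\pi$ with $\pi(1)<\pi(2)$, $ER$ is the set of permutations $\pi$ of length $n$ with $\pi(n-1)<\pi(n)$, and $\{1\}$ is the set containing only the permutation of length 1.
   Context: A permutation $\pi$ of length $n$ is alternating if for every $i\in[2,n-1]$, $\pi(i)$ does not lie between $\pi(i-1)$ and $\pi(i+1)$. An interval of a permutation is a set of contiguous positions whose values form a contiguous set; a permutation of length $n$ is simple if its only intervals have sizes $0,1,n$. Given a permutation $\sigma$ of length $m$ and nonempty permutations $\alpha_1,\dots,\alpha_m$, the inflation $\sigma[\alpha_1,\dots,\alpha_m]$ is the permutation obtained by replacing each entry $\sigma(i)$ by an interval order isomorphic to $\alpha_i$, these intervals being in the relative order given by $\sigma$ (e.g. $2413[1,132,321,12]=479832156$). A property is any set of permutations; $\pi$ satisfies property $P$ if $\pi\in P$. A set $\mathcal{P}$ of properties is query-complete if, for every simple permutation $\sigma$ (of length $m$) and every $P\in\mathcal{P}$, whether $\sigma[\alpha_1,\dots,\alpha_m]$ satisfies $P$ is determined by $\sigma$ together with knowledge of which properties of $\mathcal{P}$ each $\alpha_i$ satisfies. *)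

theory Defs
  imports Main
begin

text \<open>Permutations of length n are represented as lists of the values 0..n-1
  (0-based one-line notation): position i holds value xs!i.\<close>

definition is_perm :: "nat list \<Rightarrow> bool" where
  "is_perm xs \<longleftrightarrow> distinct xs \<and> set xs = {0..<length xs}"

definition is_interval :: "nat list \<Rightarrow> nat set \<Rightarrow> bool" where
  "is_interval xs I \<longleftrightarrow> I \<subseteq> {0..<length xs}
     \<and> (\<exists>a b. I = {a..<b}) \<and> (\<exists>c d. (\<lambda>i. xs ! i) ` I = {c..<d})"

definition simple_perm :: "nat list \<Rightarrow> bool" where
  "simple_perm xs \<longleftrightarrow> is_perm xs \<and>
     (\<forall>I. is_interval xs I \<longrightarrow> card I \<in> {0, 1, length xs})"

text \<open>Inflation sigma[alpha_1,...,alpha_m]: block i is alpha_i shifted by the total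
  length of the blocks whose sigma-value is smaller.\<close>
definition inflate :: "nat list \<Rightarrow> nat list list \<Rightarrow> nat list" where
  "inflate \<sigma> \<alpha>s = concat (map (\<lambda>i. map (\<lambda>v. v +
       sum_list [length (\<alpha>s ! j). j \<leftarrow> [0..<length \<sigma>], \<sigma> ! j < \<sigma> ! i]) (\<alpha>s ! i))
     [0..<length \<sigma>])"

definition AL :: "nat list set" where
  "AL = {xs. is_perm xs \<and> (\<forall>i. 0 < i \<and> i + 1 < length xs \<longrightarrow>
      \<not> ((xs!(i-1) < xs!i \<and> xs!i < xs!(i+1)) \<or> (xs!(i+1) < xs!i \<and> xs!i < xs!(i-1))))}"

definition BR :: "nat list set" where
  "BR = {xs. is_perm xs \<and> 2 \<le> length xs \<and> xs!0 < xs!1}"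

definition ER :: "nat list set" where
  "ER = {xs. is_perm xs \<and> 2 \<le> length xs \<and> xs!(length xs - 2) < xs!(length xs - 1)}"

definition query_complete :: "nat list set set \<Rightarrow> bool" where
  "query_complete \<P> \<longleftrightarrow>
     (\<forall>\<sigma> P \<alpha>s \<beta>s. simple_perm \<sigma> \<and> P \<in> \<P> \<and>
        length \<alpha>s = length \<sigma> \<and> length \<beta>s = length \<sigma> \<and>
        (\<forall>\<alpha> \<in> set \<alpha>s. is_perm \<alpha> \<and> \<alpha> \<noteq> []) \<and>
        (\<forall>\<beta> \<in> set \<beta>s. is_perm \<beta> \<and> \<beta> \<noteq> []) \<and>
        (\<forall>i < length \<sigma>. \<forall>Q \<in> \<P>. (\<alpha>s ! i \<in> Q \<longleftrightarrow> \<beta>s ! i \<in> Q))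
      \<longrightarrow> (inflate \<sigma> \<alpha>s \<in> P \<longleftrightarrow> inflate \<sigma> \<beta>s \<in> P))"

text \<open>Sanity: 2413[1,132,321,12] = 479832156 (0-based: 368721045).\<close>
lemma "inflate [1,3,0,2] [[0],[0,2,1],[2,1,0],[0,1]] = [3,6,8,7,2,1,0,4,5]"
  by (simp add: inflate_def)

end

theory Submission
  imports Defs
begin

fun asc :: "nat list \<Rightarrow> bool list" where
  "asc (a # b # xs) = (a < b) # asc (b # xs)"
| "asc _ = []"

fun altw :: "bool list \<Rightarrow> bool" where
  "altw (a # b # xs) = (a \<noteq> b \<and> altw (b # xs))"
| "altw _ = True"

definition sm :: "bool list \<Rightarrow> bool \<times> bool \<times> bool \<times> bool" where
  "sm w = (w = [], hd w, last w, altw w)"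

lemma length_asc: "length (asc xs) = length xs - 1"
  by (induction xs rule: asc.induct) auto

lemma nth_asc: "i + 1 < length xs \<Longrightarrow> asc xs ! i = (xs ! i < xs ! (i+1))"
proof (induction xs arbitrary: i rule: asc.induct)
  case (1 a b xs) then show ?case by (cases i) auto
qed auto

lemma altw_nth: "altw ws \<longleftrightarrow> (\<forall>i. i + 1 < length ws \<longrightarrow> ws ! i \<noteq> ws ! (i+1))"
proof (induction ws rule: altw.induct)
  case (1 a b xs)
  show ?case
  proof
    assume "altw (a # b # xs)"
    then show "\<forall>i. i + 1 < length (a # b # xs) \<longrightarrow> (a # b # xs) ! i \<noteq> (a # b # xs) ! (i + 1)"
      using 1 by (auto simp: nth_Cons split: nat.splits)
  next
    assume h: "\<forall>i. i + 1 < length (a # b # xs) \<longrightarrow> (a # b # xs) ! i \<noteq> (a # b # xs) ! (i + 1)"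
    have "a \<noteq> b" using h[rule_format, of 0] by simp
    moreover have "\<forall>i. i + 1 < length (b # xs) \<longrightarrow> (b # xs) ! i \<noteq> (b # xs) ! (i + 1)"
    proof (intro allI impI)
      fix i assume "i + 1 < length (b # xs)"
      then show "(b # xs) ! i \<noteq> (b # xs) ! (i + 1)" using h[rule_format, of "Suc i"] by simp
    qed
    ultimately show "altw (a # b # xs)" using 1 by simp
  qed
qed (auto simp: less_Suc_eq)

lemma asc_append: "xs \<noteq> [] \<Longrightarrow> ys \<noteq> [] \<Longrightarrow> asc (xs @ ys) = asc xs @ (last xs < hd ys) # asc ys"
proof (induction xs)
  case (Cons a xs) then show ?case by (cases xs; cases ys) auto
qed simp

lemma asc_shift: "asc (map (\<lambda>v. v + c) xs) = asc xs"
  by (induction xs rule: asc.induct) auto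

lemma altw_append: "altw (w @ s # r) \<longleftrightarrow> altw w \<and> (w \<noteq> [] \<longrightarrow> last w \<noteq> s) \<and> (r \<noteq> [] \<longrightarrow> s \<noteq> hd r) \<and> altw r"
proof (induction w)
  case Nil then show ?case by (cases r) auto
next
  case (Cons a w) then show ?case by (cases w) auto
qed

lemma sm_append: "sm w1 = sm w2 \<Longrightarrow> sm r1 = sm r2 \<Longrightarrow> sm (w1 @ s # r1) = sm (w2 @ s # r2)"
  unfolding sm_def using altw_append[of w1 s r1] altw_append[of w2 s r2]
  by (auto simp: hd_append)

lemma blocks:
  "length bs = length cs \<Longrightarrow> (\<forall>i<length bs. bs!i \<noteq> [] \<and> cs!i \<noteq> [] \<and> sm (asc (bs!i)) = sm (asc (cs!i)))
   \<Longrightarrow> (\<forall>i. i+1 < length bs \<longrightarrow> (last (bs!i) < hd (bs!(i+1))) = (last (cs!i) < hd (cs!(i+1))))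
   \<Longrightarrow> sm (asc (concat bs)) = sm (asc (concat cs))"
proof (induction bs arbitrary: cs)
  case Nil then show ?case by simp
next
  case (Cons b bs')
  then obtain c cs' where cs: "cs = c # cs'" by (cases cs) auto
  show ?case
  proof (cases "bs' = []")
    case True
    then show ?thesis using Cons.prems cs by auto
  next
    case False
    then have ne: "cs' \<noteq> []" using Cons.prems cs by auto
    have b0: "bs'!0 \<noteq> []" "cs'!0 \<noteq> []" using Cons.prems(2)[rule_format, of 1] cs False by auto
    have hb: "hd (concat bs') = hd (bs'!0)" "concat bs' \<noteq> []"
      using False b0 by (cases bs'; simp)+
    have hc: "hd (concat cs') = hd (cs'!0)" "concat cs' \<noteq> []"
      using ne b0 by (cases cs'; simp)+
    have bc: "b \<noteq> []" "c \<noteq> []" "sm (asc b) = sm (asc c)" using Cons.prems(2)[rule_format, of 0] cs by auto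
    have IH: "sm (asc (concat bs')) = sm (asc (concat cs'))"
    proof (rule Cons.IH)
      show "length bs' = length cs'" using Cons.prems cs by simp
      show "\<forall>i<length bs'. bs' ! i \<noteq> [] \<and> cs' ! i \<noteq> [] \<and> sm (asc (bs' ! i)) = sm (asc (cs' ! i))"
        using Cons.prems(2) cs by auto
      show "\<forall>i. i + 1 < length bs' \<longrightarrow> (last (bs' ! i) < hd (bs' ! (i + 1))) = (last (cs' ! i) < hd (cs' ! (i + 1)))"
      proof (intro allI impI)
        fix i assume "i + 1 < length bs'"
        then show "(last (bs' ! i) < hd (bs' ! (i + 1))) = (last (cs' ! i) < hd (cs' ! (i + 1)))"
          using Cons.prems(3)[rule_format, of "Suc i"] cs by simp
      qed
    qed
    have sep: "(last b < hd (bs'!0)) = (last c < hd (cs'!0))"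
      using Cons.prems(3)[rule_format, of 0] cs False by simp
    have "asc (concat (b # bs')) = asc b @ (last b < hd (bs'!0)) # asc (concat bs')"
      using asc_append[OF bc(1) hb(2)] hb(1) by simp
    moreover have "asc (concat (c # cs')) = asc c @ (last c < hd (cs'!0)) # asc (concat cs')"
      using asc_append[OF bc(2) hc(2)] hc(1) by simp
    ultimately show ?thesis using sm_append[OF bc(3) IH] sep cs by simp
  qed
qed


lemma sum_list_filter_map: "sum_list [f j. j \<leftarrow> xs, P j] = sum_list (map f (filter P xs))"
  by (induction xs) auto

definition off :: "nat list \<Rightarrow> nat list list \<Rightarrow> nat \<Rightarrow> nat" where
  "off \<sigma> \<alpha>s i = sum_list [length (\<alpha>s ! j). j \<leftarrow> [0..<length \<sigma>], \<sigma> ! j < \<sigma> ! i]"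

lemma off_eq: "off \<sigma> \<alpha>s i = (\<Sum>j\<in>{j. j < length \<sigma> \<and> \<sigma>!j < \<sigma>!i}. length (\<alpha>s ! j))"
proof -
  have "off \<sigma> \<alpha>s i = sum_list (map (\<lambda>j. length (\<alpha>s ! j)) (filter (\<lambda>j. \<sigma> ! j < \<sigma> ! i) [0..<length \<sigma>]))"
    unfolding off_def sum_list_filter_map ..
  also have "\<dots> = (\<Sum>j\<in>set (filter (\<lambda>j. \<sigma> ! j < \<sigma> ! i) [0..<length \<sigma>]). length (\<alpha>s ! j))"
    by (rule sum_list_distinct_conv_sum_set) simp
  also have "set (filter (\<lambda>j. \<sigma> ! j < \<sigma> ! i) [0..<length \<sigma>]) = {j. j < length \<sigma> \<and> \<sigma>!j < \<sigma>!i}"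
    by auto
  finally show ?thesis .
qed

lemma inflate_eq: "inflate \<sigma> \<alpha>s = concat (map (\<lambda>i. map (\<lambda>v. v + off \<sigma> \<alpha>s i) (\<alpha>s ! i)) [0..<length \<sigma>])"
  unfolding inflate_def off_def ..

lemma off_lt:
  assumes "i < length \<sigma>" "j < length \<sigma>" "\<sigma>!i < \<sigma>!j"
  shows "off \<sigma> \<alpha>s i + length (\<alpha>s ! i) \<le> off \<sigma> \<alpha>s j"
proof -
  let ?A = "{k. k < length \<sigma> \<and> \<sigma>!k < \<sigma>!i}"
  let ?B = "{k. k < length \<sigma> \<and> \<sigma>!k < \<sigma>!j}"
  have "insert i ?A \<subseteq> ?B" using assms by auto
  moreover have "i \<notin> ?A" by simp
  ultimately have "(\<Sum>k\<in>insert i ?A. length (\<alpha>s ! k)) \<le> (\<Sum>k\<in>?B. length (\<alpha>s ! k))"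
    by (intro sum_mono2) auto
  moreover have "(\<Sum>k\<in>insert i ?A. length (\<alpha>s ! k)) = length (\<alpha>s ! i) + (\<Sum>k\<in>?A. length (\<alpha>s ! k))"
    by (rule sum.insert) auto
  ultimately show ?thesis unfolding off_eq by simp
qed

lemma off_le:
  assumes "i < length \<sigma>"
  shows "off \<sigma> \<alpha>s i + length (\<alpha>s ! i) \<le> (\<Sum>k<length \<sigma>. length (\<alpha>s ! k))"
proof -
  let ?A = "{k. k < length \<sigma> \<and> \<sigma>!k < \<sigma>!i}"
  have "insert i ?A \<subseteq> {..<length \<sigma>}" using assms by auto
  then have "(\<Sum>k\<in>insert i ?A. length (\<alpha>s ! k)) \<le> (\<Sum>k<length \<sigma>. length (\<alpha>s ! k))"
    by (intro sum_mono2) auto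
  moreover have "(\<Sum>k\<in>insert i ?A. length (\<alpha>s ! k)) = length (\<alpha>s ! i) + (\<Sum>k\<in>?A. length (\<alpha>s ! k))"
    by (rule sum.insert) auto
  ultimately show ?thesis unfolding off_eq by simp
qed

lemma perm_lt: "is_perm xs \<Longrightarrow> v \<in> set xs \<Longrightarrow> v < length xs"
  unfolding is_perm_def by auto

lemma length_inflate: "length (inflate \<sigma> \<alpha>s) = (\<Sum>k<length \<sigma>. length (\<alpha>s ! k))"
  unfolding inflate_eq length_concat map_map
  by (simp add: comp_def interv_sum_list_conv_sum_set_nat lessThan_atLeast0)

lemma inflate_perm:
  assumes p: "is_perm \<sigma>" and l: "length \<alpha>s = length \<sigma>" and a: "\<forall>\<alpha>\<in>set \<alpha>s. is_perm \<alpha> \<and> \<alpha> \<noteq> []"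
  shows "is_perm (inflate \<sigma> \<alpha>s)"
proof -
  let ?blk = "\<lambda>i. map (\<lambda>v. v + off \<sigma> \<alpha>s i) (\<alpha>s ! i)"
  have ai: "is_perm (\<alpha>s ! i)" "\<alpha>s!i \<noteq> []" if "i < length \<sigma>" for i
    using a l that by auto
  have setblk: "set (?blk i) \<subseteq> {off \<sigma> \<alpha>s i..<off \<sigma> \<alpha>s i + length (\<alpha>s ! i)}" if "i < length \<sigma>" for i
    using perm_lt[OF ai(1)[OF that]] by auto
  have ds: "distinct \<sigma>" using p unfolding is_perm_def by simp
  have disj: "set (?blk i) \<inter> set (?blk j) = {}" if "i < length \<sigma>" "j < length \<sigma>" "i \<noteq> j" for i j
  proof -
    have "\<sigma>!i \<noteq> \<sigma>!j" using ds that by (simp add: nth_eq_iff_index_eq)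
    then consider "\<sigma>!i < \<sigma>!j" | "\<sigma>!j < \<sigma>!i" by linarith
    then show ?thesis
    proof cases
      case 1 then show ?thesis using off_lt[OF that(1,2) 1, of \<alpha>s] setblk[OF that(1)] setblk[OF that(2)] by fastforce
    next
      case 2 then show ?thesis using off_lt[OF that(2,1) 2, of \<alpha>s] setblk[OF that(1)] setblk[OF that(2)] by fastforce
    qed
  qed
  have dist: "distinct (inflate \<sigma> \<alpha>s)"
    unfolding inflate_eq
  proof (rule distinct_concat)
    have "inj_on ?blk {0..<length \<sigma>}"
    proof (rule inj_onI)
      fix i j assume ij: "i \<in> {0..<length \<sigma>}" "j \<in> {0..<length \<sigma>}" "?blk i = ?blk j"
      show "i = j"
      proof (rule ccontr)
        assume "i \<noteq> j"
        then have "set (?blk i) \<inter> set (?blk j) = {}" using disj ij(1,2) by simp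
        moreover have "?blk i \<noteq> []" using ai(2) ij by auto
        ultimately show False using ij(3) by (metis inf.idem set_empty)
      qed
    qed
    then show "distinct (map ?blk [0..<length \<sigma>])" by (simp add: distinct_map)
    show "\<And>ys. ys \<in> set (map ?blk [0..<length \<sigma>]) \<Longrightarrow> distinct ys"
      using ai(1) unfolding is_perm_def by (auto simp: distinct_map inj_on_def)
    show "\<And>ys zs. ys \<in> set (map ?blk [0..<length \<sigma>]) \<Longrightarrow> zs \<in> set (map ?blk [0..<length \<sigma>]) \<Longrightarrow> ys \<noteq> zs \<Longrightarrow> set ys \<inter> set zs = {}"
    proof -
      fix ys zs assume "ys \<in> set (map ?blk [0..<length \<sigma>])" "zs \<in> set (map ?blk [0..<length \<sigma>])" "ys \<noteq> zs"
      then obtain i j where ij: "i < length \<sigma>" "j < length \<sigma>" "ys = ?blk i" "zs = ?blk j" by auto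
      with \<open>ys \<noteq> zs\<close> have "i \<noteq> j" by auto
      then show "set ys \<inter> set zs = {}" using disj[OF ij(1,2)] ij(3,4) by simp
    qed
  qed
  let ?N = "\<Sum>k<length \<sigma>. length (\<alpha>s ! k)"
  have sub: "set (inflate \<sigma> \<alpha>s) \<subseteq> {0..<?N}"
  proof
    fix x assume "x \<in> set (inflate \<sigma> \<alpha>s)"
    then obtain i where i: "i < length \<sigma>" "x \<in> set (?blk i)" unfolding inflate_eq by auto
    then show "x \<in> {0..<?N}" using setblk[OF i(1)] off_le[OF i(1), of \<alpha>s] by auto
  qed
  have "card (set (inflate \<sigma> \<alpha>s)) = ?N" using dist distinct_card length_inflate by metis
  then have "set (inflate \<sigma> \<alpha>s) = {0..<?N}" using sub by (intro card_subset_eq) auto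
  then show ?thesis unfolding is_perm_def using dist length_inflate by metis
qed


lemma perm_distinct: "is_perm xs \<Longrightarrow> distinct xs" unfolding is_perm_def by simp

lemma AL_char: "xs \<in> AL \<longleftrightarrow> is_perm xs \<and> altw (asc xs)"
proof (cases "is_perm xs")
  case True
  have d: "distinct xs" using perm_distinct[OF True] .
  have "(\<forall>i. 0 < i \<and> i + 1 < length xs \<longrightarrow>
      \<not> ((xs!(i-1) < xs!i \<and> xs!i < xs!(i+1)) \<or> (xs!(i+1) < xs!i \<and> xs!i < xs!(i-1))))
    \<longleftrightarrow> (\<forall>i. i + 1 < length (asc xs) \<longrightarrow> asc xs ! i \<noteq> asc xs ! (i+1))"
  proof
    assume h: "\<forall>i. 0 < i \<and> i + 1 < length xs \<longrightarrow>
      \<not> ((xs!(i-1) < xs!i \<and> xs!i < xs!(i+1)) \<or> (xs!(i+1) < xs!i \<and> xs!i < xs!(i-1)))"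
    show "\<forall>i. i + 1 < length (asc xs) \<longrightarrow> asc xs ! i \<noteq> asc xs ! (i+1)"
    proof (intro allI impI)
      fix i assume i: "i + 1 < length (asc xs)"
      then have l: "i + 2 < length xs" by (simp add: length_asc)
      have ne: "xs!i \<noteq> xs!(i+1)" "xs!(i+1) \<noteq> xs!(i+2)" using d l by (simp_all add: nth_eq_iff_index_eq)
      have "\<not> ((xs!i < xs!(i+1) \<and> xs!(i+1) < xs!(i+2)) \<or> (xs!(i+2) < xs!(i+1) \<and> xs!(i+1) < xs!i))"
        using h[rule_format, of "i+1"] l by (simp add: numeral_2_eq_2)
      then show "asc xs ! i \<noteq> asc xs ! (i+1)"
        using nth_asc[of i xs] nth_asc[of "i+1" xs] l ne by (auto simp: numeral_2_eq_2)
    qed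
  next
    assume h: "\<forall>i. i + 1 < length (asc xs) \<longrightarrow> asc xs ! i \<noteq> asc xs ! (i+1)"
    show "\<forall>i. 0 < i \<and> i + 1 < length xs \<longrightarrow>
      \<not> ((xs!(i-1) < xs!i \<and> xs!i < xs!(i+1)) \<or> (xs!(i+1) < xs!i \<and> xs!i < xs!(i-1)))"
    proof (intro allI impI)
      fix i assume i: "0 < i \<and> i + 1 < length xs"
      then obtain k where k: "i = k + 1" by (cases i) auto
      have "asc xs ! k \<noteq> asc xs ! (k+1)" using h[rule_format, of k] i k by (simp add: length_asc)
      then show "\<not> ((xs!(i-1) < xs!i \<and> xs!i < xs!(i+1)) \<or> (xs!(i+1) < xs!i \<and> xs!i < xs!(i-1)))"
        using nth_asc[of k xs] nth_asc[of "k+1" xs] i k by auto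
    qed
  qed
  then show ?thesis using True unfolding AL_def altw_nth by simp
qed (simp add: AL_def)

lemma BR_char: "xs \<in> BR \<longleftrightarrow> is_perm xs \<and> asc xs \<noteq> [] \<and> hd (asc xs)"
proof -
  have "asc xs \<noteq> [] \<longleftrightarrow> 2 \<le> length xs" using length_asc[of xs] by (metis One_nat_def diff_is_0_eq length_0_conv not_less_eq_eq numeral_2_eq_2)
  moreover have "2 \<le> length xs \<Longrightarrow> hd (asc xs) = (xs!0 < xs!1)"
  proof -
    assume l: "2 \<le> length xs"
    then have "asc xs \<noteq> []" using length_asc[of xs] by auto
    then have "hd (asc xs) = asc xs ! 0" by (simp add: hd_conv_nth)
    then show ?thesis using nth_asc[of 0 xs] l by simp
  qed
  ultimately show ?thesis unfolding BR_def by auto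
qed

lemma ER_char: "xs \<in> ER \<longleftrightarrow> is_perm xs \<and> asc xs \<noteq> [] \<and> last (asc xs)"
proof -
  have "asc xs \<noteq> [] \<longleftrightarrow> 2 \<le> length xs" using length_asc[of xs] by (metis One_nat_def diff_is_0_eq length_0_conv not_less_eq_eq numeral_2_eq_2)
  moreover have "2 \<le> length xs \<Longrightarrow> last (asc xs) = (xs!(length xs - 2) < xs!(length xs - 1))"
  proof -
    assume l: "2 \<le> length xs"
    then have "last (asc xs) = asc xs ! (length xs - 2)"
      using length_asc[of xs] by (subst last_conv_nth) (auto simp: numeral_2_eq_2)
    also have "\<dots> = (xs!(length xs - 2) < xs!(length xs - 2 + 1))" using l by (intro nth_asc) simp
    also have "length xs - 2 + 1 = length xs - 1" using l by simp
    finally show ?thesis .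
  qed
  ultimately show ?thesis unfolding ER_def by auto
qed

lemma one_char: "is_perm xs \<Longrightarrow> xs \<noteq> [] \<Longrightarrow> (xs = [0] \<longleftrightarrow> asc xs = [])"
proof -
  assume p: "is_perm xs" "xs \<noteq> []"
  have "asc xs = [] \<longleftrightarrow> length xs = 1" using length_asc[of xs] p(2) by (cases xs) auto
  moreover have "length xs = 1 \<Longrightarrow> xs = [0]"
  proof -
    assume "length xs = 1"
    then obtain a where "xs = [a]" by (cases xs) auto
    then show ?thesis using p(1) unfolding is_perm_def by auto
  qed
  ultimately show ?thesis by auto
qed

lemma sm_eq_alpha:
  assumes "is_perm a" "a \<noteq> []" "is_perm b" "b \<noteq> []"
    and "\<forall>Q \<in> {AL, BR, ER, {[0]}}. (a \<in> Q \<longleftrightarrow> b \<in> Q)"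
  shows "sm (asc a) = sm (asc b)"
proof -
  have e: "asc a = [] \<longleftrightarrow> asc b = []" using assms one_char[of a] one_char[of b] by auto
  show ?thesis
  proof (cases "asc a = []")
    case True then show ?thesis using e by simp
  next
    case False
    then show ?thesis using e assms AL_char[of a] AL_char[of b] BR_char[of a] BR_char[of b]
      ER_char[of a] ER_char[of b] unfolding sm_def by auto
  qed
qed


lemma sep_lemma:
  assumes p: "is_perm \<sigma>" and l: "length \<alpha>s = length \<sigma>" and a: "\<forall>\<alpha>\<in>set \<alpha>s. is_perm \<alpha> \<and> \<alpha> \<noteq> []"
    and i: "i + 1 < length \<sigma>"
  shows "(last (map (\<lambda>v. v + off \<sigma> \<alpha>s i) (\<alpha>s ! i)) < hd (map (\<lambda>v. v + off \<sigma> \<alpha>s (i+1)) (\<alpha>s ! (i+1))))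
     = (\<sigma>!i < \<sigma>!(i+1))"
proof -
  have ai: "is_perm (\<alpha>s ! k)" "\<alpha>s!k \<noteq> []" if "k < length \<sigma>" for k
    using a l that by auto
  let ?x = "last (\<alpha>s ! i)" and ?y = "hd (\<alpha>s ! (i+1))"
  have x: "?x < length (\<alpha>s ! i)" using perm_lt[OF ai(1)] ai(2) i by simp
  have y: "?y < length (\<alpha>s ! (i+1))" using perm_lt[OF ai(1)] ai(2) i by simp
  have ne: "\<alpha>s ! i \<noteq> []" "\<alpha>s ! (i+1) \<noteq> []" using ai(2) i by auto
  have ds: "distinct \<sigma>" using p unfolding is_perm_def by simp
  have "\<sigma>!i \<noteq> \<sigma>!(i+1)" using ds i by (simp add: nth_eq_iff_index_eq)
  then consider (c1) "\<sigma>!i < \<sigma>!(i+1)" | (c2) "\<sigma>!(i+1) < \<sigma>!i" by linarith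
  note cs = this
  have lm: "last (map (\<lambda>v. v + off \<sigma> \<alpha>s i) (\<alpha>s ! i)) = ?x + off \<sigma> \<alpha>s i"
    using ne(1) by (simp add: last_map)
  have hm: "hd (map (\<lambda>v. v + off \<sigma> \<alpha>s (i+1)) (\<alpha>s ! (i+1))) = ?y + off \<sigma> \<alpha>s (i+1)"
    using ne(2) by (simp add: hd_map)
  have i0: "i < length \<sigma>" using i by simp
  show ?thesis
  proof (cases rule: cs)
    case c1
    have "off \<sigma> \<alpha>s i + length (\<alpha>s ! i) \<le> off \<sigma> \<alpha>s (i+1)" by (rule off_lt[OF i0 i c1])
    then show ?thesis using c1 x lm hm by simp
  next
    case c2
    have "off \<sigma> \<alpha>s (i+1) + length (\<alpha>s ! (i+1)) \<le> off \<sigma> \<alpha>s i" by (rule off_lt[OF i i0 c2])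
    then show ?thesis using c2 y lm hm by simp
  qed
qed

theorem mainTheorem4:
  shows "query_complete {AL, BR, ER, {[0]}}"
  unfolding query_complete_def
proof (intro allI impI)
  fix \<sigma> P \<alpha>s \<beta>s
  assume H: "simple_perm \<sigma> \<and> P \<in> {AL, BR, ER, {[0]}} \<and>
        length \<alpha>s = length \<sigma> \<and> length \<beta>s = length \<sigma> \<and>
        (\<forall>\<alpha> \<in> set \<alpha>s. is_perm \<alpha> \<and> \<alpha> \<noteq> []) \<and>
        (\<forall>\<beta> \<in> set \<beta>s. is_perm \<beta> \<and> \<beta> \<noteq> []) \<and>
        (\<forall>i < length \<sigma>. \<forall>Q \<in> {AL, BR, ER, {[0]}}. (\<alpha>s ! i \<in> Q \<longleftrightarrow> \<beta>s ! i \<in> Q))"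
  have p: "is_perm \<sigma>" using H unfolding simple_perm_def by simp
  have la: "length \<alpha>s = length \<sigma>" and lb: "length \<beta>s = length \<sigma>"
    and a: "\<forall>\<alpha> \<in> set \<alpha>s. is_perm \<alpha> \<and> \<alpha> \<noteq> []" and b: "\<forall>\<beta> \<in> set \<beta>s. is_perm \<beta> \<and> \<beta> \<noteq> []"
    using H by auto
  have Q: "\<forall>i < length \<sigma>. \<forall>Q \<in> {AL, BR, ER, {[0]}}. (\<alpha>s ! i \<in> Q \<longleftrightarrow> \<beta>s ! i \<in> Q)"
    using H by (elim conjE) assumption
  show "inflate \<sigma> \<alpha>s \<in> P \<longleftrightarrow> inflate \<sigma> \<beta>s \<in> P"
  proof (cases "length \<sigma> = 0")
    case True
    then show ?thesis unfolding inflate_def by simp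
  next
    case False
    let ?bs = "map (\<lambda>i. map (\<lambda>v. v + off \<sigma> \<alpha>s i) (\<alpha>s ! i)) [0..<length \<sigma>]"
    let ?cs = "map (\<lambda>i. map (\<lambda>v. v + off \<sigma> \<beta>s i) (\<beta>s ! i)) [0..<length \<sigma>]"
    have smeq: "sm (asc (concat ?bs)) = sm (asc (concat ?cs))"
    proof (rule blocks)
      show "length ?bs = length ?cs" by simp
      show "\<forall>i<length ?bs. ?bs!i \<noteq> [] \<and> ?cs!i \<noteq> [] \<and> sm (asc (?bs!i)) = sm (asc (?cs!i))"
      proof (intro allI impI)
        fix i assume "i < length ?bs"
        then have i: "i < length \<sigma>" by simp
        have ai: "is_perm (\<alpha>s!i)" "\<alpha>s!i \<noteq> []" using a la i by auto
        have bi: "is_perm (\<beta>s!i)" "\<beta>s!i \<noteq> []" using b lb i by auto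
        have "sm (asc (\<alpha>s!i)) = sm (asc (\<beta>s!i))"
          using sm_eq_alpha[OF ai bi mp[OF spec[OF Q, of i] i]] .
        then show "?bs!i \<noteq> [] \<and> ?cs!i \<noteq> [] \<and> sm (asc (?bs!i)) = sm (asc (?cs!i))"
          using i ai bi by (simp add: asc_shift)
      qed
      show "\<forall>i. i+1 < length ?bs \<longrightarrow> (last (?bs!i) < hd (?bs!(i+1))) = (last (?cs!i) < hd (?cs!(i+1)))"
      proof (intro allI impI)
        fix i assume "i + 1 < length ?bs"
        then have i: "i + 1 < length \<sigma>" by simp
        have e1: "?bs!i = map (\<lambda>v. v + off \<sigma> \<alpha>s i) (\<alpha>s ! i)" "?bs!(i+1) = map (\<lambda>v. v + off \<sigma> \<alpha>s (i+1)) (\<alpha>s ! (i+1))"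
          "?cs!i = map (\<lambda>v. v + off \<sigma> \<beta>s i) (\<beta>s ! i)" "?cs!(i+1) = map (\<lambda>v. v + off \<sigma> \<beta>s (i+1)) (\<beta>s ! (i+1))"
          using i by (auto simp del: upt_Suc)
        show "(last (?bs!i) < hd (?bs!(i+1))) = (last (?cs!i) < hd (?cs!(i+1)))"
          unfolding e1 sep_lemma[OF p la a i] sep_lemma[OF p lb b i] ..
      qed
    qed
    define \<pi> where "\<pi> = inflate \<sigma> \<alpha>s"
    define \<pi>' where "\<pi>' = inflate \<sigma> \<beta>s"
    have sm\<pi>: "sm (asc \<pi>) = sm (asc \<pi>')" using smeq unfolding \<pi>_def \<pi>'_def inflate_eq .
    have pp: "is_perm \<pi>" "is_perm \<pi>'" unfolding \<pi>_def \<pi>'_def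
      using inflate_perm[OF p la a] inflate_perm[OF p lb b] by auto
    have "\<alpha>s!0 \<noteq> []" "\<beta>s!0 \<noteq> []" using a b la lb False by auto
    moreover have u: "[0..<length \<sigma>] = 0 # [1..<length \<sigma>]" using False by (simp add: upt_conv_Cons)
    ultimately have nz: "\<pi> \<noteq> []" "\<pi>' \<noteq> []" unfolding \<pi>_def \<pi>'_def inflate_eq u by simp_all
    have P: "P = AL \<or> P = BR \<or> P = ER \<or> P = {[0]}" using H by auto
    have e: "(asc \<pi> = []) = (asc \<pi>' = [])" "hd (asc \<pi>) = hd (asc \<pi>')"
      "last (asc \<pi>) = last (asc \<pi>')" "altw (asc \<pi>) = altw (asc \<pi>')"
      using sm\<pi> unfolding sm_def by simp_all
    have "\<pi> \<in> P \<longleftrightarrow> \<pi>' \<in> P"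
      using P
    proof (elim disjE)
      assume "P = AL" then show ?thesis using AL_char[of \<pi>] AL_char[of \<pi>'] pp e(4) by simp
    next
      assume "P = BR" then show ?thesis using BR_char[of \<pi>] BR_char[of \<pi>'] pp e(1,2) by simp
    next
      assume "P = ER" then show ?thesis using ER_char[of \<pi>] ER_char[of \<pi>'] pp e(1,3) by simp
    next
      assume "P = {[0]}" then show ?thesis using one_char[OF pp(1) nz(1)] one_char[OF pp(2) nz(2)] e(1) by simp
    qed
    then show ?thesis unfolding \<pi>_def \<pi>'_def .
  qed
qed

end
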